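(* Let $\mathbf k=(k_1,\ldots,k_r)\in\mathbb N^r$, $\mathbf m=(m_1,\ldots,m_p)\in\mathbb N^p$, $\boldsymbol\eta=(\eta_1,\ldots,\eta_r)\in\{\pm1\}^r$, $\boldsymbol\varepsilon=(\varepsilon_1,\ldots,\varepsilon_p)\in\{\pm1\}^p$, $|x|<1$, and put $\underline\eta=\eta_1\cdots\eta_r$, $n_0:=n$. Then \[ \mathrm{Mi}_{m_p,\ldots,m_1,k_1+1,k_2,\ldots,k_r}\big(\underline\eta\,\mathbf q(\boldsymbol\varepsilon),\mathbf p(\boldsymbol\eta);x\big) =(-1)^p\sum_{n=1}^\infty\frac{M_{n-1}\big(k_2,\ldots,k_r;\mathbf p(\eta_2,\ldots,\eta_r)\big)}{n^{k_1+1}}\big(1+\underline\eta(-1)^n\big)\sum_{n\ge n_1\ge\cdots\ge n_p\ge1}x^{n_p}\prod_{j=1}^p\frac{1+\varepsilon_j(-1)^{n_{j-1}+n_j}}{n_j^{m_j}} \] \[ -\sum_{j=1}^p(-1)^j\,\mathrm{Mi}_{m_p,\ldots,m_j}\big(-\mathbf q(\varepsilon_{j+1},\ldots,\varepsilon_p),-1;x\big)\,M\Big(\big(\mathbf k;\mathbf p(\boldsymbol\eta)\big)\circledast\big(1,m_1,\ldots,m_{j-1};-\mathbf p(\varepsilon_1,\ldots,\varepsilon_j)\big)^\star\Big) \] \[ -\sum_{j=1}^p(-1)^j\,\mathrm{Mi}_{m_p,\ldots,m_j}\big(\mathbf q(\varepsilon_{j+1},\ldots,\varepsilon_p),1;x\big)\,M\Big(\big(\mathbf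 k;\mathbf p(\boldsymbol\eta)\big)\circledast\big(1,m_1,\ldots,m_{j-1};\mathbf p(\varepsilon_1,\ldots,\varepsilon_j)\big)^\star\Big), \] where for $j=p$ the sign vector of $\mathrm{Mi}$ is just $(-1)$ resp. $(1)$. (The sign vector on the left is the concatenation of $\underline\eta\,\mathbf q(\boldsymbol\varepsilon)$, of length $p$, and $\mathbf p(\boldsymbol\eta)$, of length $r$.)
   Context: For $\boldsymbol\varepsilon=(\varepsilon_1,\ldots,\varepsilon_r)\in\{\pm1\}^r$: $\mathbf p(\boldsymbol\varepsilon)=(\varepsilon_1\cdots\varepsilon_r,\varepsilon_2\cdots\varepsilon_r,\ldots,\varepsilon_r)$, $\mathbf q(\boldsymbol\varepsilon)=(\varepsilon_1\cdots\varepsilon_r,\varepsilon_1\cdots\varepsilon_{r-1},\ldots,\varepsilon_1)$, empty for empty input; $a\boldsymbol\varepsilon=(a\varepsilon_1,\ldots,a\varepsilon_r)$. $M_n(\mathbf k;\boldsymbol\varepsilon)=\sum_{n\ge n_1>\cdots>n_r>0}\prod_j(1+\varepsilon_j(-1)^{n_j})/n_j^{k_j}$ and $M^\star_n(\mathbf k;\boldsymbol\varepsilon)=\sum_{n\ge n_1\ge\cdots\ge n_r\ge1}\prod_j(1+\varepsilon_j(-1)^{n_j})/n_j^{k_j}$, both $=1$ for empty index, $M_0$ of a nonempty index $=0$. $\mathrm{Mi}_{\mathbf k}(\boldsymbol\varepsilon;x)=\sum_{n_1>\cdots>n_r>0}x^{n_1}\prod_j(1+\varepsilon_j(-1)^{n_j})/n_j^{k_j}$.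 Convoluted multiple mixed value: for $\mathbf k\in\mathbb N^r$, $\mathbf l\in\mathbb N^s$, $\boldsymbol\eta\in\{\pm1,0\}\times\{\pm1\}^{r-1}$, $\boldsymbol\varepsilon\in\{\pm1,0\}\times\{\pm1\}^{s-1}$, $(\eta_1,\varepsilon_1)\ne(0,0)$: $M((\mathbf k;\boldsymbol\eta)\circledast(\mathbf l;\boldsymbol\varepsilon)^\star)=\sum_{n\ge1}\frac{M_{n-1}(k_2,\ldots,k_r;\eta_2,\ldots,\eta_r)M^\star_n(l_2,\ldots,l_s;\varepsilon_2,\ldots,\varepsilon_s)}{n^{k_1+l_1}}\cdot\frac{(1+\varepsilon_1(-1)^n)(1+\eta_1(-1)^n)}{2}$. *)

theory Defs
  imports "HOL-Analysis.Analysis"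
begin

fun pvec :: "int list \<Rightarrow> int list" where
  "pvec [] = []"
| "pvec (e # es) = (e * prod_list es) # pvec es"

definition qvec :: "int list \<Rightarrow> int list" where
  "qvec es = map (\<lambda>i. prod_list (take (length es - i) es)) [0..<length es]"

definition fac :: "int \<Rightarrow> nat \<Rightarrow> nat \<Rightarrow> real" where
  "fac e n k = (1 + of_int e * (-1) ^ n) / (of_nat n) ^ k"

fun Mfin :: "nat \<Rightarrow> nat list \<Rightarrow> int list \<Rightarrow> real" where
  "Mfin n [] [] = 1"
| "Mfin n (k # ks) (e # es) = (\<Sum>n1=1..n. fac e n1 k * Mfin (n1 - 1) ks es)"
| "Mfin n _ _ = 0"

fun Mstar :: "nat \<Rightarrow> nat list \<Rightarrow> int list \<Rightarrow> real" where
  "Mstar n [] [] = 1"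
| "Mstar n (k # ks) (e # es) = (\<Sum>n1=1..n. fac e n1 k * Mstar n1 ks es)"
| "Mstar n _ _ = 0"

fun Mi :: "nat list \<Rightarrow> int list \<Rightarrow> complex \<Rightarrow> complex" where
  "Mi [] [] x = 1"
| "Mi (k # ks) (e # es) x =
     (\<Sum>n. x ^ (n + 1) * of_real (fac e (n + 1) k * Mfin n ks es))"
| "Mi _ _ x = 0"

definition Mconv :: "nat list \<Rightarrow> int list \<Rightarrow> nat list \<Rightarrow> int list \<Rightarrow> real" where
  "Mconv k eta l eps =
     (\<Sum>n. (let N = n + 1 in
        Mfin (N - 1) (tl k) (tl eta) * Mstar N (tl l) (tl eps)
          / (of_nat N) ^ (hd k + hd l)
          * ((1 + of_int (hd eps) * (-1) ^ N) * (1 + of_int (hd eta) * (-1) ^ N) / 2)))"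

fun Sx :: "complex \<Rightarrow> nat \<Rightarrow> nat list \<Rightarrow> int list \<Rightarrow> complex" where
  "Sx x prev [] [] = x ^ prev"
| "Sx x prev (m # ms) (e # es) =
     (\<Sum>nj=1..prev. of_real ((1 + of_int e * (-1) ^ (prev + nj)) / (of_nat nj) ^ m) * Sx x nj ms es)"
| "Sx x prev _ _ = 0"

end

theory Submission
  imports Defs
begin


lemma summable_pow_geom:
  fixes r :: real
  assumes "\<bar>r\<bar> < 1"
  shows "summable (\<lambda>n. real n ^ a * r ^ n)"
  using assms
proof (induction a arbitrary: r)
  case 0
  then show ?case by simp
next
  case (Suc a)
  have "summable (\<lambda>n. diffs (\<lambda>n. real n ^ a) n * r ^ n)"
    by (rule termdiff_converges[of r 1]) (use Suc in auto)
  then have "summable (\<lambda>n. r * (real (Suc n) ^ Suc a * r ^ n))"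
    by (intro summable_mult) (simp add: diffs_def)
  then have "summable (\<lambda>n. real (Suc n) ^ Suc a * r ^ Suc n)"
    by (simp add: mult_ac)
  then show ?case
    using summable_Suc_iff[where f="\<lambda>n. real n ^ Suc a * r ^ n"] by simp
qed



definition cf :: "int \<Rightarrow> nat \<Rightarrow> nat \<Rightarrow> nat \<Rightarrow> real" where
  "cf e a N m = (1 + of_int e * (-1) ^ (a + N)) / (of_nat N) ^ m"

fun V :: "complex \<Rightarrow> nat \<Rightarrow> nat list \<Rightarrow> int list \<Rightarrow> complex" where
  "V x n [] [] = x ^ n"
| "V x n (m # ms) (e # es) = (\<Sum>k. of_real (cf e n (k + Suc n) m) * V x (k + Suc n) ms es)"
| "V x n _ _ = 0"

definition pm :: "int list \<Rightarrow> bool" where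
  "pm es \<longleftrightarrow> (\<forall>e\<in>set es. e = 1 \<or> e = -1)"

lemma pm_simps[simp]: "pm []" "pm (e # es) \<longleftrightarrow> (e = 1 \<or> e = -1) \<and> pm es"
  by (auto simp: pm_def)

lemma num_bound: "e = 1 \<or> e = -1 \<Longrightarrow> \<bar>1 + real_of_int e * (-1) ^ a\<bar> \<le> 2"
  by (cases "even a") auto

lemma num_nonneg: "e = 1 \<or> e = -1 \<Longrightarrow> 0 \<le> 1 + real_of_int e * (-1) ^ a"
  by (cases "even a") auto

lemma frac_bound:
  assumes "e = 1 \<or> e = -1"
  shows "\<bar>(1 + real_of_int e * (-1) ^ a) / real N ^ m\<bar> \<le> 2"
proof (cases "N = 0")
  case True
  then show ?thesis using num_bound[OF assms] by (cases m) auto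
next
  case False
  then have "real N ^ m \<ge> 1" by simp
  then have "\<bar>(1 + real_of_int e * (-1) ^ a) / real N ^ m\<bar> \<le> \<bar>1 + real_of_int e * (-1) ^ a\<bar>"
    using frac_le[of "1 + real_of_int e * (-1) ^ a" "1 + real_of_int e * (-1) ^ a" 1 "real N ^ m"]
      num_nonneg[OF assms] by simp
  then show ?thesis using num_bound[OF assms, of a] by linarith
qed

lemma cf_bound: "e = 1 \<or> e = -1 \<Longrightarrow> \<bar>cf e a N m\<bar> \<le> 2"
  unfolding cf_def using frac_bound[of e "a + N"] by simp

lemma V_bound:
  assumes "norm x < 1" "pm es"
  shows "norm (V x n ms es) \<le> (2 / (1 - norm x)) ^ length ms * norm x ^ n"
  using assms
proof (induction x n ms es rule: V.induct)
  case (1 x n)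
  then show ?case by (simp add: norm_power)
next
  case (2 x n m ms e es)
  define r where "r = norm x"
  define C where "C = (2 / (1 - r)) ^ length ms"
  have r: "0 \<le> r" "r < 1" using 2 by (auto simp: r_def)
  have C: "C \<ge> 0" using r by (simp add: C_def)
  have b: "norm (of_real (cf e n (k + Suc n) m) * V x (k + Suc n) ms es) \<le> 2 * C * r ^ (k + Suc n)" for k
  proof -
    have "norm (V x (k + Suc n) ms es) \<le> C * r ^ (k + Suc n)"
      using 2 by (simp add: C_def r_def)
    moreover have "\<bar>cf e n (k + Suc n) m\<bar> \<le> 2" using 2 by (intro cf_bound) auto
    ultimately have "\<bar>cf e n (k + Suc n) m\<bar> * norm (V x (k + Suc n) ms es) \<le> 2 * (C * r ^ (k + Suc n))"
      by (intro mult_mono) auto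
    then show ?thesis by (simp add: norm_mult mult.assoc)
  qed
  have sg0: "summable (\<lambda>k. (2 * C * r ^ Suc n) * r ^ k)"
    by (intro summable_mult summable_geometric) (use r in auto)
  have eqg: "(\<lambda>k. 2 * C * r ^ (k + Suc n)) = (\<lambda>k. (2 * C * r ^ Suc n) * r ^ k)"
    by (simp add: power_add mult_ac)
  have sg: "summable (\<lambda>k. 2 * C * r ^ (k + Suc n))"
    using sg0 eqg by simp
  have "norm (V x n (m # ms) (e # es)) \<le> (\<Sum>k. 2 * C * r ^ (k + Suc n))"
    unfolding V.simps by (rule norm_suminf_le[OF b sg])
  also have "\<dots> = 2 * C * r ^ Suc n * (\<Sum>k. r ^ k)"
    unfolding eqg by (rule suminf_mult) (use r in auto)
  also have "\<dots> = 2 * C * r ^ Suc n / (1 - r)"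
    using r by (simp add: suminf_geometric)
  also have "\<dots> \<le> 2 * C * r ^ n / (1 - r)"
    using r C by (intro divide_right_mono mult_left_mono) (auto simp: power_le_one mult_left_le_one_le)
  also have "\<dots> = (2 / (1 - norm x)) ^ length (m # ms) * norm x ^ n"
    by (simp add: C_def r_def)
  finally show ?case .
qed auto



lemma V_summ:
  assumes "norm x < 1" "pm es" "\<And>k. \<bar>c k\<bar> \<le> B"
  shows "summable (\<lambda>k. of_real (c k) * V x (k + j) ms es)"
proof -
  define r where "r = norm x"
  define C where "C = (2 / (1 - r)) ^ length ms"
  have r: "0 \<le> r" "r < 1" using assms by (auto simp: r_def)
  have C: "C \<ge> 0" using r by (simp add: C_def)
  have B: "B \<ge> 0" using assms(3)[of 0] by linarith
  have "norm (of_real (c k) * V x (k + j) ms es) \<le> (B * C * r ^ j) * r ^ k" for k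
  proof -
    have "norm (V x (k + j) ms es) \<le> C * r ^ (k + j)"
      using V_bound[OF assms(1,2)] by (simp add: C_def r_def)
    then have "\<bar>c k\<bar> * norm (V x (k + j) ms es) \<le> B * (C * r ^ (k + j))"
      using assms(3)[of k] B by (intro mult_mono) auto
    then show ?thesis by (simp add: norm_mult power_add mult_ac)
  qed
  note b = this
  have sg: "summable (\<lambda>k. (B * C * r ^ j) * r ^ k)"
    by (intro summable_mult summable_geometric) (use r in auto)
  show ?thesis
    by (rule summable_comparison_test'[OF sg, where N=0]) (use b in auto)
qed

fun W :: "nat \<Rightarrow> nat list \<Rightarrow> int list \<Rightarrow> real" where
  "W n [] [] = 1"
| "W n (m # ms) (e # es) = (\<Sum>N=1..n. cf e n N m * W N ms es)"
| "W n _ _ = 0"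

definition Tm :: "complex \<Rightarrow> nat \<Rightarrow> nat \<Rightarrow> nat list \<Rightarrow> int list \<Rightarrow> complex" where
  "Tm x j n ms es =
     V x 0 (drop (j - 1) ms) ((-1) # drop j es)
       * of_real ((1 - of_int (prod_list (take j es)) * (-1) ^ n) / 2 * W n (take (j - 1) ms) (take (j - 1) es))
   + V x 0 (drop (j - 1) ms) (1 # drop j es)
       * of_real ((1 + of_int (prod_list (take j es)) * (-1) ^ n) / 2 * W n (take (j - 1) ms) (take (j - 1) es))"

lemma cf_key:
  assumes "e = 1 \<or> e = -1"
  shows "cf e n N m * (1 + s * of_int P * (-1) ^ N) = cf e n N m * (1 + s * of_int (e * P) * (-1) ^ n)"
proof -
  have "(1 + real_of_int e * (-1) ^ (n + N)) * (1 + s * of_int P * (-1) ^ N)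
      = (1 + real_of_int e * (-1) ^ (n + N)) * (1 + s * of_int (e * P) * (-1) ^ n)"
    using assms by (cases "even n"; cases "even N") (auto simp: power_add algebra_simps)
  then show ?thesis unfolding cf_def by (simp add: divide_simps)
qed

lemma Tm_step:
  assumes "1 \<le> j" "e = 1 \<or> e = -1"
  shows "(\<Sum>i<n. of_real (cf e n (Suc i) m) * Tm x j (Suc i) ms es) = Tm x (Suc j) n (m # ms) (e # es)"
proof -
  define P where "P = prod_list (take j es)"
  define Vm where "Vm = V x 0 (drop (j - 1) ms) ((-1) # drop j es)"
  define Vp where "Vp = V x 0 (drop (j - 1) ms) (1 # drop j es)"
  define w where "w N = W N (take (j - 1) ms) (take (j - 1) es)" for N
  have tk: "take j (m # ms) = m # take (j - 1) ms" "take j (e # es) = e # take (j - 1) es"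
    "drop j (m # ms) = drop (j - 1) ms"
    using assms(1) by (cases j; simp)+
  have R: "Tm x (Suc j) n (m # ms) (e # es) =
      Vm * of_real ((1 - of_int (e * P) * (-1) ^ n) / 2 * (\<Sum>i<n. cf e n (Suc i) m * w (Suc i)))
    + Vp * of_real ((1 + of_int (e * P) * (-1) ^ n) / 2 * (\<Sum>i<n. cf e n (Suc i) m * w (Suc i)))"
    unfolding Tm_def Vm_def Vp_def P_def w_def using tk
    by (simp add: sum.atLeast1_atMost_eq)
  have L: "Tm x j N ms es = Vm * of_real ((1 - of_int P * (-1) ^ N) / 2 * w N)
        + Vp * of_real ((1 + of_int P * (-1) ^ N) / 2 * w N)" for N
    unfolding Tm_def Vm_def Vp_def P_def w_def by simp
  have k1: "cf e n N m * ((1 - of_int P * (-1) ^ N) / 2 * w N) = (1 - of_int (e * P) * (-1) ^ n) / 2 * (cf e n N m * w N)" for N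
  proof -
    have H: "cf e n N m * (1 - of_int P * (-1) ^ N) = cf e n N m * (1 - of_int (e * P) * (-1) ^ n)"
      using cf_key[OF assms(2), of n N m "-1" P] by simp
    have "cf e n N m * ((1 - of_int P * (-1) ^ N) / 2 * w N) = (cf e n N m * (1 - of_int P * (-1) ^ N)) * w N / 2"
      by (simp add: field_simps)
    also have "\<dots> = (cf e n N m * (1 - of_int (e * P) * (-1) ^ n)) * w N / 2" using H by simp
    also have "\<dots> = (1 - of_int (e * P) * (-1) ^ n) / 2 * (cf e n N m * w N)" by (simp add: field_simps)
    finally show ?thesis .
  qed
  have k2: "cf e n N m * ((1 + of_int P * (-1) ^ N) / 2 * w N) = (1 + of_int (e * P) * (-1) ^ n) / 2 * (cf e n N m * w N)" for N
  proof -
    have H: "cf e n N m * (1 + of_int P * (-1) ^ N) = cf e n N m * (1 + of_int (e * P) * (-1) ^ n)"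
      using cf_key[OF assms(2), of n N m "1" P] by simp
    have "cf e n N m * ((1 + of_int P * (-1) ^ N) / 2 * w N) = (cf e n N m * (1 + of_int P * (-1) ^ N)) * w N / 2"
      by (simp add: field_simps)
    also have "\<dots> = (cf e n N m * (1 + of_int (e * P) * (-1) ^ n)) * w N / 2" using H by simp
    also have "\<dots> = (1 + of_int (e * P) * (-1) ^ n) / 2 * (cf e n N m * w N)" by (simp add: field_simps)
    finally show ?thesis .
  qed
  have "(\<Sum>i<n. of_real (cf e n (Suc i) m) * Tm x j (Suc i) ms es)
      = (\<Sum>i<n. Vm * of_real ((1 - of_int (e * P) * (-1) ^ n) / 2 * (cf e n (Suc i) m * w (Suc i)))
             + Vp * of_real ((1 + of_int (e * P) * (-1) ^ n) / 2 * (cf e n (Suc i) m * w (Suc i))))"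
  proof (rule sum.cong[OF refl])
    fix i
    have "of_real (cf e n (Suc i) m) * Tm x j (Suc i) ms es
      = Vm * of_real (cf e n (Suc i) m * ((1 - of_int P * (-1) ^ Suc i) / 2 * w (Suc i)))
      + Vp * of_real (cf e n (Suc i) m * ((1 + of_int P * (-1) ^ Suc i) / 2 * w (Suc i)))"
      unfolding L of_real_mult by (simp only: algebra_simps)
    then show "of_real (cf e n (Suc i) m) * Tm x j (Suc i) ms es
      = Vm * of_real ((1 - of_int (e * P) * (-1) ^ n) / 2 * (cf e n (Suc i) m * w (Suc i)))
             + Vp * of_real ((1 + of_int (e * P) * (-1) ^ n) / 2 * (cf e n (Suc i) m * w (Suc i)))"
      by (simp only: k1 k2)
  qed
  also have "\<dots> = Tm x (Suc j) n (m # ms) (e # es)"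
    unfolding R by (simp add: sum.distrib sum_distrib_left)
  finally show ?thesis .
qed



lemma sum_1_Suc: "(\<Sum>j=1..Suc p. f j) = f 1 + (\<Sum>j=1..p. f (Suc j))"
proof -
  have "(\<Sum>j=1..Suc p. f j) = (\<Sum>k<Suc p. f (Suc k))" by (simp add: sum.atLeast1_atMost_eq)
  also have "\<dots> = f 1 + (\<Sum>k<p. f (Suc (Suc k)))" by (subst sum.lessThan_Suc_shift) simp
  also have "(\<Sum>k<p. f (Suc (Suc k))) = (\<Sum>j=1..p. f (Suc j))" by (simp add: sum.atLeast1_atMost_eq)
  finally show ?thesis .
qed

lemma cf_split:
  "cf e n N m = (1 - of_int e * (-1) ^ n) / 2 * cf (-1) 0 N m + (1 + of_int e * (-1) ^ n) / 2 * cf 1 0 N m"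
  unfolding cf_def by (cases "real N ^ m = 0") (simp_all add: power_add field_simps zero_power)

lemma Vid:
  assumes "norm x < 1" "length ms = length es" "pm es"
  shows "V x n ms es = (-1) ^ length ms * Sx x n ms es - (\<Sum>j=1..length ms. (-1) ^ j * Tm x j n ms es)"
  using assms(2,3)
proof (induction ms es arbitrary: n rule: list_induct2)
  case Nil
  then show ?case by simp
next
  case (Cons m ms e es)
  have e: "e = 1 \<or> e = -1" and pes: "pm es" using Cons.prems by auto
  define h where "h = (\<lambda>k. of_real (cf e n (Suc k) m) * V x (Suc k) ms es)"
  have hs: "summable h"
    using V_summ[OF assms(1) pes, of "\<lambda>k. cf e n (Suc k) m" 2 1 ms] cf_bound[OF e]
    by (simp add: h_def)
  have split: "V x n (m # ms) (e # es) = suminf h - (\<Sum>i<n. h i)"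
    using suminf_split_initial_segment[OF hs, of n] by (simp add: h_def)
  define Vm where "Vm = V x 0 (m # ms) ((-1) # es)"
  define Vp where "Vp = V x 0 (m # ms) (1 # es)"
  define a where "a = real_of_int e * (-1) ^ n"
  have sm: "summable (\<lambda>k. of_real (cf (-1) 0 (Suc k) m) * V x (Suc k) ms es)"
    using V_summ[OF assms(1) pes, of "\<lambda>k. cf (-1) 0 (Suc k) m" 2 1 ms] cf_bound[of "-1"] by simp
  have sp: "summable (\<lambda>k. of_real (cf 1 0 (Suc k) m) * V x (Suc k) ms es)"
    using V_summ[OF assms(1) pes, of "\<lambda>k. cf 1 0 (Suc k) m" 2 1 ms] cf_bound[of 1] by simp
  define cm where "cm = (of_real ((1 - a) / 2) :: complex)"
  define cp where "cp = (of_real ((1 + a) / 2) :: complex)"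
  define fm where "fm = (\<lambda>k. of_real (cf (-1) 0 (Suc k) m) * V x (Suc k) ms es)"
  define fp where "fp = (\<lambda>k. of_real (cf 1 0 (Suc k) m) * V x (Suc k) ms es)"
  have hk: "h = (\<lambda>k. cm * fm k + cp * fp k)"
    unfolding h_def a_def cm_def cp_def fm_def fp_def by (rule ext, subst cf_split) (simp add: algebra_simps)
  have s1: "suminf h = Tm x 1 n (m # ms) (e # es)"
  proof -
    have "suminf h = suminf (\<lambda>k. cm * fm k) + suminf (\<lambda>k. cp * fp k)"
      unfolding hk by (rule suminf_add[symmetric]) (intro summable_mult, use sm sp in \<open>simp add: fm_def fp_def\<close>)+
    also have "\<dots> = cm * Vm + cp * Vp"
      using suminf_mult[OF sm, of cm] suminf_mult[OF sp, of cp] by (simp add: Vm_def Vp_def fm_def fp_def)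
    also have "\<dots> = Tm x 1 n (m # ms) (e # es)"
      unfolding Tm_def Vm_def Vp_def a_def cm_def cp_def by (simp add: mult_ac)
    finally show ?thesis .
  qed
  have sx: "Sx x n (m # ms) (e # es) = (\<Sum>i<n. of_real (cf e n (Suc i) m) * Sx x (Suc i) ms es)"
    by (simp add: cf_def sum.atLeast1_atMost_eq)
  have s2: "(\<Sum>i<n. h i) = (-1) ^ length ms * Sx x n (m # ms) (e # es)
      - (\<Sum>j=1..length ms. (-1) ^ j * Tm x (Suc j) n (m # ms) (e # es))"
  proof -
    have "(\<Sum>i<n. h i) = (\<Sum>i<n. (-1) ^ length ms * (of_real (cf e n (Suc i) m) * Sx x (Suc i) ms es)
         - (\<Sum>j=1..length ms. (-1) ^ j * (of_real (cf e n (Suc i) m) * Tm x j (Suc i) ms es)))"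
      unfolding h_def Cons.IH[OF pes] by (simp add: algebra_simps sum_distrib_left)
    also have "\<dots> = (-1) ^ length ms * (\<Sum>i<n. of_real (cf e n (Suc i) m) * Sx x (Suc i) ms es)
         - (\<Sum>j=1..length ms. (-1) ^ j * (\<Sum>i<n. of_real (cf e n (Suc i) m) * Tm x j (Suc i) ms es))"
      by (simp add: sum_subtractf sum_distrib_left sum.swap[of _ "{..<n}"])
    also have "\<dots> = (-1) ^ length ms * Sx x n (m # ms) (e # es)
      - (\<Sum>j=1..length ms. (-1) ^ j * Tm x (Suc j) n (m # ms) (e # es))"
      unfolding sx by (intro arg_cong2[where f="(-)"] refl sum.cong arg_cong2[where f="(*)"]) (auto simp: Tm_step[OF _ e])
    finally show ?thesis .
  qed
  have ss: "(\<Sum>j=1..length (m # ms). (-1) ^ j * Tm x j n (m # ms) (e # es))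
    = - Tm x 1 n (m # ms) (e # es) - (\<Sum>j=1..length ms. (-1) ^ j * Tm x (Suc j) n (m # ms) (e # es))"
    by (simp only: length_Cons sum_1_Suc) (simp add: sum_negf)
  show ?case
    unfolding split s1 s2 ss by simp
qed



lemma infsum_suminf_nat:
  fixes f :: "nat \<Rightarrow> 'a::{topological_comm_monoid_add,t2_space}"
  assumes "f summable_on UNIV"
  shows "infsum f UNIV = suminf f"
  using assms by (metis has_sum_imp_sums has_sum_infsum sums_unique)

lemma summable_on_suminf_nat:
  fixes f :: "nat \<Rightarrow> 'a::{topological_comm_monoid_add,t2_space}"
  assumes "f summable_on UNIV"
  shows "summable f"
  using assms summable_on_imp_summable by blast

lemma swap_tri:
  fixes f :: "nat \<Rightarrow> nat \<Rightarrow> complex"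
  assumes sm: "summable (\<lambda>i. \<Sum>n<i. norm (f n i))"
  shows "(\<Sum>i. \<Sum>n<i. f n i) = (\<Sum>n. \<Sum>k. f n (k + Suc n))"
proof -
  define F where "F i n = (if n < i then f n i else 0)" for i n
  have hs: "((\<lambda>n. (\<lambda>(i,n). norm (F i n)) (i, n)) has_sum (\<Sum>n<i. norm (f n i))) UNIV" for i
  proof -
    have "((\<lambda>n. norm (F i n)) has_sum (\<Sum>n<i. norm (F i n))) {..<i}" by (rule has_sum_finite) simp
    then have "((\<lambda>n. norm (F i n)) has_sum (\<Sum>n<i. norm (f n i))) {..<i}" by (simp add: F_def)
    then show ?thesis
      by (subst has_sum_cong_neutral[where T="{..<i}" and g="\<lambda>n. norm (F i n)"]) (auto simp: F_def)
  qed
  have gs: "(\<lambda>i. \<Sum>n<i. norm (f n i)) summable_on UNIV"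
    using sm by (subst summable_on_UNIV_nonneg_real_iff) (auto intro: sum_nonneg)
  have abs: "(\<lambda>(i,n). norm (F i n)) summable_on UNIV \<times> UNIV"
    by (rule summable_on_SigmaI[OF hs gs]) auto
  have S: "(\<lambda>(i,n). F i n) summable_on UNIV \<times> UNIV"
    by (rule abs_summable_summable, rule summable_on_cong[THEN iffD1, OF _ abs]) auto
  have S': "(\<lambda>(n,i). F i n) summable_on UNIV \<times> UNIV"
    using S summable_on_swap[of "\<lambda>(i,n). F i n" UNIV UNIV] by (simp add: case_prod_beta)
  have swap: "infsum (\<lambda>i. infsum (F i) UNIV) UNIV = infsum (\<lambda>n. infsum (\<lambda>i. F i n) UNIV) UNIV"
    using infsum_swap_banach[OF S] by simp
  have L1: "infsum (F i) UNIV = (\<Sum>n<i. f n i)" for i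
  proof -
    have "infsum (F i) UNIV = infsum (F i) {..<i}"
      by (rule infsum_cong_neutral) (auto simp: F_def)
    then show ?thesis by (simp add: F_def)
  qed
  have L2: "(\<lambda>i. infsum (F i) UNIV) summable_on UNIV"
    using summable_on_Sigma_banach[OF S] by simp
  have R1: "(\<lambda>i. F i n) summable_on UNIV" for n
    using summable_on_SigmaD1[OF S', of n] by simp
  have R2: "(\<lambda>n. infsum (\<lambda>i. F i n) UNIV) summable_on UNIV"
    using summable_on_Sigma_banach[OF S'] by simp
  have R3: "infsum (\<lambda>i. F i n) UNIV = (\<Sum>k. f n (k + Suc n))" for n
  proof -
    have "infsum (\<lambda>i. F i n) UNIV = (\<Sum>i. F i n)" by (rule infsum_suminf_nat[OF R1])
    also have "\<dots> = (\<Sum>k. F (k + Suc n) n) + (\<Sum>i<Suc n. F i n)"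
      by (rule suminf_split_initial_segment) (rule summable_on_suminf_nat[OF R1])
    also have "\<dots> = (\<Sum>k. f n (k + Suc n))" by (simp add: F_def)
    finally show ?thesis .
  qed
  have "(\<Sum>i. \<Sum>n<i. f n i) = infsum (\<lambda>i. infsum (F i) UNIV) UNIV"
    using infsum_suminf_nat[OF L2] by (simp add: L1)
  also have "\<dots> = infsum (\<lambda>n. infsum (\<lambda>i. F i n) UNIV) UNIV" by (rule swap)
  also have "\<dots> = (\<Sum>n. \<Sum>k. f n (k + Suc n))"
    using infsum_suminf_nat[OF R2] by (simp add: R3)
  finally show ?thesis .
qed



fun Z :: "complex \<Rightarrow> nat \<Rightarrow> nat list \<Rightarrow> int list \<Rightarrow> complex" where
  "Z x n [] [] = x ^ n"
| "Z x n (m # ms) (s # ss) = (\<Sum>k. of_real (fac s (k + Suc n) m) * Z x (k + Suc n) ms ss)"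
| "Z x n _ _ = 0"

lemma fac_bound: "e = 1 \<or> e = -1 \<Longrightarrow> \<bar>fac e N m\<bar> \<le> 2"
  unfolding fac_def by (rule frac_bound)

lemma Z_bound:
  assumes "norm x < 1" "pm es"
  shows "norm (Z x n ms es) \<le> (2 / (1 - norm x)) ^ length ms * norm x ^ n"
  using assms
proof (induction x n ms es rule: Z.induct)
  case (1 x n)
  then show ?case by (simp add: norm_power)
next
  case (2 x n m ms e es)
  define r where "r = norm x"
  define C where "C = (2 / (1 - r)) ^ length ms"
  have r: "0 \<le> r" "r < 1" using 2 by (auto simp: r_def)
  have C: "C \<ge> 0" using r by (simp add: C_def)
  have b: "norm (of_real (fac e (k + Suc n) m) * Z x (k + Suc n) ms es) \<le> 2 * C * r ^ (k + Suc n)" for k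
  proof -
    have "norm (Z x (k + Suc n) ms es) \<le> C * r ^ (k + Suc n)"
      using 2 by (simp add: C_def r_def)
    moreover have "\<bar>fac e (k + Suc n) m\<bar> \<le> 2" using 2 by (intro fac_bound) auto
    ultimately have "\<bar>fac e (k + Suc n) m\<bar> * norm (Z x (k + Suc n) ms es) \<le> 2 * (C * r ^ (k + Suc n))"
      by (intro mult_mono) auto
    then show ?thesis by (simp add: norm_mult mult.assoc)
  qed
  have sg0: "summable (\<lambda>k. (2 * C * r ^ Suc n) * r ^ k)"
    by (intro summable_mult summable_geometric) (use r in auto)
  have eqg: "(\<lambda>k. 2 * C * r ^ (k + Suc n)) = (\<lambda>k. (2 * C * r ^ Suc n) * r ^ k)"
    by (simp add: power_add mult_ac)
  have sg: "summable (\<lambda>k. 2 * C * r ^ (k + Suc n))"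
    using sg0 eqg by simp
  have "norm (Z x n (m # ms) (e # es)) \<le> (\<Sum>k. 2 * C * r ^ (k + Suc n))"
    unfolding Z.simps by (rule norm_suminf_le[OF b sg])
  also have "\<dots> = 2 * C * r ^ Suc n * (\<Sum>k. r ^ k)"
    unfolding eqg by (rule suminf_mult) (use r in auto)
  also have "\<dots> = 2 * C * r ^ Suc n / (1 - r)"
    using r by (simp add: suminf_geometric)
  also have "\<dots> \<le> 2 * C * r ^ n / (1 - r)"
    using r C by (intro divide_right_mono mult_left_mono) (auto simp: power_le_one mult_left_le_one_le)
  also have "\<dots> = (2 / (1 - norm x)) ^ length (m # ms) * norm x ^ n"
    by (simp add: C_def r_def)
  finally show ?case .
qed auto

lemma Z_summ:
  assumes "norm x < 1" "pm es" "\<And>k. \<bar>c k\<bar> \<le> B"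
  shows "summable (\<lambda>k. of_real (c k) * Z x (k + j) ms es)"
proof -
  define r where "r = norm x"
  define C where "C = (2 / (1 - r)) ^ length ms"
  have r: "0 \<le> r" "r < 1" using assms by (auto simp: r_def)
  have C: "C \<ge> 0" using r by (simp add: C_def)
  have B: "B \<ge> 0" using assms(3)[of 0] by linarith
  have "norm (of_real (c k) * Z x (k + j) ms es) \<le> (B * C * r ^ j) * r ^ k" for k
  proof -
    have "norm (Z x (k + j) ms es) \<le> C * r ^ (k + j)"
      using Z_bound[OF assms(1,2)] by (simp add: C_def r_def)
    then have "\<bar>c k\<bar> * norm (Z x (k + j) ms es) \<le> B * (C * r ^ (k + j))"
      using assms(3)[of k] B by (intro mult_mono) auto
    then show ?thesis by (simp add: norm_mult power_add mult_ac)
  qed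
  note b = this
  have sg: "summable (\<lambda>k. (B * C * r ^ j) * r ^ k)"
    by (intro summable_mult summable_geometric) (use r in auto)
  show ?thesis
    by (rule summable_comparison_test'[OF sg, where N=0]) (use b in auto)
qed

lemma Mfin_crude:
  assumes "pm es"
  shows "\<bar>Mfin n ks es\<bar> \<le> 2 ^ length ks * real n ^ length ks"
  using assms
proof (induction n ks es rule: Mfin.induct)
  case (2 n k ks e es)
  define L where "L = length ks"
  have e: "e = 1 \<or> e = -1" and pes: "pm es" using 2 by auto
  have "\<bar>Mfin n (k # ks) (e # es)\<bar> \<le> (\<Sum>n1=1..n. \<bar>fac e n1 k\<bar> * \<bar>Mfin (n1 - 1) ks es\<bar>)"
    by (simp add: abs_mult[symmetric])
  also have "\<dots> \<le> (\<Sum>n1=1..n. 2 * (2 ^ L * real n ^ L))"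
  proof (rule sum_mono)
    fix n1 assume n1: "n1 \<in> {1..n}"
    have "\<bar>Mfin (n1 - 1) ks es\<bar> \<le> 2 ^ L * real (n1 - 1) ^ L" using 2(1)[OF n1 pes] by (simp add: L_def)
    also have "\<dots> \<le> 2 ^ L * real n ^ L" using n1 by (intro mult_left_mono power_mono) auto
    finally show "\<bar>fac e n1 k\<bar> * \<bar>Mfin (n1 - 1) ks es\<bar> \<le> 2 * (2 ^ L * real n ^ L)"
      using fac_bound[OF e] by (intro mult_mono) auto
  qed
  also have "\<dots> = 2 ^ length (k # ks) * real n ^ length (k # ks)"
    by (simp add: L_def)
  finally show ?case .
qed auto



lemma Mi_Z:
  assumes x: "norm x < 1"
  shows "length ms = length ss \<Longrightarrow> pm ss \<Longrightarrow> pm t \<Longrightarrow> b \<noteq> [] \<Longrightarrow> length b = length t \<Longrightarrow>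
    Mi (rev ms @ b) (rev ss @ t) x
      = (\<Sum>i. of_real (fac (hd t) (Suc i) (hd b) * Mfin i (tl b) (tl t)) * Z x (Suc i) ms ss)"
proof (induction ms ss arbitrary: b t rule: list_induct2)
  case Nil
  then obtain b1 b' t1 t' where bt: "b = b1 # b'" "t = t1 # t'"
    by (metis length_0_conv list.exhaust)
  show ?case by (simp add: bt mult.commute)
next
  case (Cons m ms s ss)
  obtain b1 b' t1 t' where bt: "b = b1 # b'" "t = t1 # t'"
    using Cons.prems by (metis length_0_conv list.exhaust)
  have s: "s = 1 \<or> s = -1" and pss: "pm ss" and pt: "pm t" and pt': "pm t'" and t1: "t1 = 1 \<or> t1 = -1"
    using Cons.prems bt by auto
  have IH: "Mi (rev ms @ (m # b)) (rev ss @ (s # t)) x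
      = (\<Sum>i. of_real (fac s (Suc i) m * Mfin i b t) * Z x (Suc i) ms ss)"
    using Cons.IH[of "s # t" "m # b"] Cons.prems by simp
  define g where "g n = fac t1 (Suc n) b1 * Mfin n b' t'" for n
  define f where "f n i = of_real (g n) * (of_real (fac s (Suc i) m) * Z x (Suc i) ms ss)" for n i
  have tmq: "of_real (fac s (Suc i) m * Mfin i b t) * Z x (Suc i) ms ss = (\<Sum>n<i. f n i)" for i
  proof -
    have "Mfin i b t = (\<Sum>n<i. g n)"
      by (simp add: bt g_def sum.atLeast1_atMost_eq)
    then show ?thesis
      by (simp add: f_def sum_distrib_right sum_distrib_left mult_ac)
  qed
  define L where "L = length b'"
  define r where "r = norm x"
  define C where "C = (2 / (1 - r)) ^ length ms"
  have r: "0 \<le> r" "r < 1" using x by (auto simp: r_def)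
  have C: "C \<ge> 0" using r by (simp add: C_def)
  define K where "K = 4 * 2 ^ L * C"
  have K: "K \<ge> 0" using C by (simp add: K_def)
  have fb: "norm (f n i) \<le> K * (real i ^ L * r ^ i)" if "n < i" for n i
  proof -
    have "\<bar>Mfin n b' t'\<bar> \<le> 2 ^ L * real n ^ L"
      using Mfin_crude[OF pt'] by (simp add: L_def bt)
    also have "\<dots> \<le> 2 ^ L * real i ^ L" using that by (intro mult_left_mono power_mono) auto
    finally have "\<bar>fac t1 (Suc n) b1\<bar> * \<bar>Mfin n b' t'\<bar> \<le> 2 * (2 ^ L * real i ^ L)"
      using fac_bound[OF t1] by (intro mult_mono) auto
    then have g: "\<bar>g n\<bar> \<le> 2 * (2 ^ L * real i ^ L)" by (simp add: g_def abs_mult)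
    have "norm (Z x (Suc i) ms ss) \<le> C * r ^ Suc i"
      using Z_bound[OF x pss, of "Suc i" ms] unfolding C_def r_def .
    also have "\<dots> \<le> C * r ^ i" using r C by (intro mult_left_mono power_decreasing) auto
    finally have "\<bar>fac s (Suc i) m\<bar> * norm (Z x (Suc i) ms ss) \<le> 2 * (C * r ^ i)"
      using fac_bound[OF s] by (intro mult_mono) auto
    note h2 = this
    have "\<bar>g n\<bar> * (\<bar>fac s (Suc i) m\<bar> * norm (Z x (Suc i) ms ss)) \<le> (2 * (2 ^ L * real i ^ L)) * (2 * (C * r ^ i))"
      by (rule mult_mono[OF g h2]) auto
    then show ?thesis by (simp add: f_def norm_mult K_def mult_ac)
  qed
  have sm: "summable (\<lambda>i. \<Sum>n<i. norm (f n i))"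
  proof (rule summable_comparison_test'[where N=0])
    show "summable (\<lambda>i. K * (real i ^ Suc L * r ^ i))"
      by (intro summable_mult summable_pow_geom) (use r in auto)
    fix i :: nat
    have "(\<Sum>n<i. norm (f n i)) \<le> (\<Sum>n<i. K * (real i ^ L * r ^ i))"
      by (rule sum_mono) (use fb in auto)
    also have "\<dots> = K * (real i ^ Suc L * r ^ i)" by simp
    finally show "norm (\<Sum>n<i. norm (f n i)) \<le> K * (real i ^ Suc L * r ^ i)"
      by (simp add: sum_nonneg)
  qed
  have inner: "(\<Sum>k. f n (k + Suc n)) = of_real (g n) * Z x (Suc n) (m # ms) (s # ss)" for n
  proof -
    have zs: "summable (\<lambda>k. of_real (fac s (k + Suc (Suc n)) m) * Z x (k + Suc (Suc n)) ms ss)"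
      by (rule Z_summ[OF x pss, of _ 2]) (use fac_bound[OF s] in auto)
    show ?thesis
      using suminf_mult[OF zs, of "of_real (g n)"] by (simp add: f_def)
  qed
  have "Mi (rev (m # ms) @ b) (rev (s # ss) @ t) x = Mi (rev ms @ (m # b)) (rev ss @ (s # t)) x" by simp
  also have "\<dots> = (\<Sum>i. \<Sum>n<i. f n i)" unfolding IH tmq ..
  also have "\<dots> = (\<Sum>n. \<Sum>k. f n (k + Suc n))" by (rule swap_tri[OF sm])
  also have "\<dots> = (\<Sum>n. of_real (g n) * Z x (Suc n) (m # ms) (s # ss))" by (simp only: inner)
  also have "\<dots> = (\<Sum>i. of_real (fac (hd t) (Suc i) (hd b) * Mfin i (tl b) (tl t)) * Z x (Suc i) (m # ms) (s # ss))"
    by (simp add: g_def bt)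
  finally show ?case .
qed

lemma Mi_Z0:
  assumes "norm x < 1" "ms \<noteq> []" "length ms = length ss" "pm ss"
  shows "Mi (rev ms) (rev ss) x = Z x 0 ms ss"
proof -
  obtain m ms' s ss' where ms: "ms = m # ms'" "ss = s # ss'"
    using assms by (metis length_0_conv list.exhaust)
  have "Mi (rev ms) (rev ss) x = Mi (rev ms' @ [m]) (rev ss' @ [s]) x" by (simp add: ms)
  also have "\<dots> = (\<Sum>i. of_real (fac s (Suc i) m * Mfin i [] []) * Z x (Suc i) ms' ss')"
    using Mi_Z[OF assms(1), of ms' ss' "[s]" "[m]"] assms ms by simp
  also have "\<dots> = Z x 0 ms ss" by (simp add: ms)
  finally show ?thesis .
qed



fun prefprod :: "int list \<Rightarrow> int list" where
  "prefprod [] = []"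
| "prefprod (e # es) = e # map (\<lambda>t. e * t) (prefprod es)"

fun mult_hd :: "int \<Rightarrow> int list \<Rightarrow> int list" where
  "mult_hd c [] = []"
| "mult_hd c (e # es) = (c * e) # es"

lemma mult_hd_1[simp]: "mult_hd 1 es = es"
  by (cases es) auto

lemma pm_prod: "pm es \<Longrightarrow> prod_list es = 1 \<or> prod_list es = -1"
  by (induction es) auto

lemma pm_map: "pm es \<Longrightarrow> c = 1 \<or> c = -1 \<Longrightarrow> pm (map (\<lambda>t. c * t) es)"
  by (induction es) auto

lemma pm_prefprod: "pm es \<Longrightarrow> pm (prefprod es)"
  by (induction es) (auto intro: pm_map)

lemma fac_cf: "fac (th * e) N m = cf (th * (-1) ^ n * e) n N m"
proof -
  have "real_of_int (th * e) * (-1) ^ N = real_of_int (th * (-1) ^ n * e) * (-1) ^ (n + N)"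
    by (cases "even n") (auto simp: power_add)
  then show ?thesis unfolding fac_def cf_def by simp
qed

lemma fac_nz: "fac c N m \<noteq> 0 \<Longrightarrow> c = 1 \<or> c = -1 \<Longrightarrow> c * (-1) ^ N = 1"
  unfolding fac_def by (cases "even N") auto

lemma ZV:
  assumes x: "norm x < 1"
  shows "length ms = length es \<Longrightarrow> pm es \<Longrightarrow> th = 1 \<or> th = -1 \<Longrightarrow>
    Z x n ms (map (\<lambda>t. th * t) (prefprod es)) = V x n ms (mult_hd (th * (-1) ^ n) es)"
proof (induction ms es arbitrary: n th rule: list_induct2)
  case Nil
  then show ?case by simp
next
  case (Cons m ms e es)
  have e: "e = 1 \<or> e = -1" and pes: "pm es" using Cons.prems by auto
  have te: "th * e = 1 \<or> th * e = -1" using e Cons.prems by auto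
  have mp: "map (\<lambda>t. th * t) (prefprod (e # es)) = (th * e) # map (\<lambda>t. (th * e) * t) (prefprod es)"
    by (simp add: mult.assoc)
  have eq: "of_real (fac (th * e) N m) * Z x N ms (map (\<lambda>t. (th * e) * t) (prefprod es))
      = of_real (cf (th * (-1) ^ n * e) n N m) * V x N ms es" for N
  proof (cases "fac (th * e) N m = 0")
    case True
    then show ?thesis using fac_cf[of th e N m n] by simp
  next
    case False
    then have "th * e * (-1) ^ N = 1" using fac_nz te by blast
    then show ?thesis using Cons.IH[OF pes te, of N] fac_cf[of th e N m n] by simp
  qed
  show ?case unfolding mp Z.simps V.simps mult_hd.simps eq ..
qed

lemma prefprod_length[simp]: "length (prefprod es) = length es"
  by (induction es) auto

lemma prefprod_nth: "i < length es \<Longrightarrow> prefprod es ! i = prod_list (take (Suc i) es)"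
proof (induction es arbitrary: i)
  case Nil
  then show ?case by simp
next
  case (Cons e es)
  then show ?case by (cases i) auto
qed

lemma rev_qvec: "rev (qvec es) = prefprod es"
proof (rule nth_equalityI)
  show "length (rev (qvec es)) = length (prefprod es)" by (simp add: qvec_def)
  fix i assume "i < length (rev (qvec es))"
  then have i: "i < length es" by (simp add: qvec_def)
  have "rev (qvec es) ! i = qvec es ! (length es - Suc i)"
    using i by (simp add: rev_nth qvec_def)
  also have "\<dots> = prod_list (take (length es - (length es - Suc i)) es)"
  proof -
    have hu: "[0..<length es] ! (length es - Suc i) = length es - Suc i" using i by simp
    show ?thesis using i unfolding qvec_def by (subst nth_map) (auto simp: hu)
  qed
  also have "length es - (length es - Suc i) = Suc i" using i by simp
  finally show "rev (qvec es) ! i = prefprod es ! i" using prefprod_nth[OF i] by simp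
qed

lemma pvec_hd: "xs \<noteq> [] \<Longrightarrow> pvec xs = prod_list xs # tl (pvec xs)"
  by (cases xs) auto

lemma pm_append: "pm (xs @ ys) \<longleftrightarrow> pm xs \<and> pm ys"
  by (auto simp: pm_def)

lemma WM:
  "length ms = length es \<Longrightarrow> pm es \<Longrightarrow> th = 1 \<or> th = -1 \<Longrightarrow> e = 1 \<or> e = -1 \<Longrightarrow>
    (1 + real_of_int (th * (prod_list es * e)) * (-1) ^ n) * Mstar n ms (map (\<lambda>s. th * s) (tl (pvec (es @ [e]))))
  = (1 + real_of_int (th * (prod_list es * e)) * (-1) ^ n) * W n ms es"
proof (induction ms es arbitrary: n rule: list_induct2)
  case Nil
  then show ?case by simp
next
  case (Cons m ms e1 es)
  define Q where "Q = prod_list es * e"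
  have e1: "e1 = 1 \<or> e1 = -1" and pes: "pm es" using Cons.prems by auto
  have Q: "Q = 1 \<or> Q = -1" using pm_prod[of "es @ [e]"] Cons.prems by (simp add: Q_def pm_append)
  have tl: "tl (pvec ((e1 # es) @ [e])) = Q # tl (pvec (es @ [e]))"
    using pvec_hd[of "es @ [e]"] by (simp add: Q_def)
  have IH: "(1 + real_of_int (th * Q) * (-1) ^ N) * Mstar N ms (map (\<lambda>s. th * s) (tl (pvec (es @ [e]))))
      = (1 + real_of_int (th * Q) * (-1) ^ N) * W N ms es" for N
    using Cons.IH[OF pes Cons.prems(2,3), of N] by (simp add: Q_def)
  define c where "c = 1 + real_of_int (th * (e1 * Q)) * (-1) ^ n"
  have key: "c * (1 + real_of_int (th * Q) * (-1) ^ N) = c * (1 + real_of_int e1 * (-1) ^ (n + N))" for N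
    unfolding c_def using e1 Q Cons.prems(2)
    by (cases "even n"; cases "even N") (auto simp: power_add)
  have "c * Mstar n (m # ms) (map (\<lambda>s. th * s) (tl (pvec ((e1 # es) @ [e]))))
      = (\<Sum>N=1..n. (c * ((1 + real_of_int (th * Q) * (-1) ^ N) * Mstar N ms (map (\<lambda>s. th * s) (tl (pvec (es @ [e])))))) / real N ^ m)"
    unfolding tl by (simp add: sum_distrib_left fac_def field_simps)
  also have "\<dots> = (\<Sum>N=1..n. (c * ((1 + real_of_int (th * Q) * (-1) ^ N) * W N ms es)) / real N ^ m)"
    by (simp only: IH)
  also have "\<dots> = (\<Sum>N=1..n. (c * (1 + real_of_int e1 * (-1) ^ (n + N)) * W N ms es) / real N ^ m)"
    by (rule sum.cong[OF refl]) (metis (no_types, lifting) key mult.assoc)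
  also have "\<dots> = c * W n (m # ms) (e1 # es)"
    by (simp add: sum_distrib_left cf_def field_simps)
  finally show ?case by (simp add: c_def Q_def mult.assoc)
qed



lemma harm_le_ln: "1 \<le> n \<Longrightarrow> harm n \<le> ln (real n) + (1::real)"
  using euler_mascheroni_sequence_decreasing[of 1 n] by (simp add: harm_def)

lemma harm_summable: "summable (\<lambda>n. harm (Suc n) ^ a / real (Suc n) ^ 2 :: real)"
proof -
  define d :: real where "d = 1 / (2 * (real a + 1))"
  have d: "0 < d" "d \<le> 1" "real a * d \<le> 1/2" by (auto simp: d_def field_simps)
  define K where "K = (1 + 1 / d) ^ a"
  have b: "harm (Suc n) ^ a / real (Suc n) ^ 2 \<le> K * real (Suc n) powr (-3/2)" for n
  proof -
    define N where "N = real (Suc n)"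
    have N: "1 \<le> N" by (simp add: N_def)
    have p1: "1 \<le> N powr d" using N d by (intro ge_one_powr_ge_zero) auto
    have "d * ln N \<le> N powr d - 1" using ln_le_minus_one[of "N powr d"] N by simp
    then have lnb: "ln N \<le> N powr d / d" using d by (simp add: field_simps)
    have "harm (Suc n) \<le> ln N + 1" using harm_le_ln[of "Suc n"] by (simp add: N_def)
    also have "\<dots> \<le> N powr d / d + N powr d" using lnb p1 by linarith
    also have "\<dots> = (1 + 1 / d) * N powr d" by (simp add: field_simps)
    finally have h: "harm (Suc n) \<le> (1 + 1 / d) * N powr d" .
    have "harm (Suc n) ^ a \<le> ((1 + 1 / d) * N powr d) ^ a"
      by (rule power_mono[OF h]) (simp add: harm_nonneg)
    also have "\<dots> = K * N powr (real a * d)"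
      using N by (simp add: K_def power_mult_distrib powr_power)
    also have "\<dots> \<le> K * N powr (1/2)"
      using d N by (intro mult_left_mono powr_mono) (auto simp: K_def)
    finally have ha: "harm (Suc n) ^ a \<le> K * N powr (1/2)" .
    have N2: "N ^ 2 = N powr 2" using N by (simp add: powr_realpow')
    have "harm (Suc n) ^ a / N ^ 2 \<le> K * N powr (1/2) / N powr 2"
      using ha N N2 by (simp add: divide_right_mono)
    also have "\<dots> = K * N powr (-3/2)"
    proof -
      have "N powr (-3/2) * N powr 2 = N powr (1/2)" using powr_add[of N "-3/2" 2] by simp
      moreover have "N powr 2 > 0" using N by simp
      ultimately show ?thesis by (simp add: field_simps)
    qed
    finally show ?thesis by (simp add: N_def)
  qed
  have "summable (\<lambda>n. real n powr (-3/2))" by (simp add: summable_real_powr_iff)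
  then have "summable (\<lambda>n. real (Suc n) powr (-3/2))"
    by (rule summable_Suc_iff[where f="\<lambda>n. real n powr (-3/2)", THEN iffD2])
  then have "summable (\<lambda>n. K * real (Suc n) powr (-3/2))" by (rule summable_mult)
  then show ?thesis
  proof (rule summable_comparison_test'[where N=0])
    fix n :: nat
    have "0 \<le> harm (Suc n) ^ a / real (Suc n) ^ 2" by (simp add: harm_nonneg)
    then show "norm (harm (Suc n) ^ a / real (Suc n) ^ 2) \<le> K * real (Suc n) powr (-3/2)"
      using b[of n] by (simp only: real_norm_def abs_of_nonneg)
  qed
qed



lemma frac_bound2:
  assumes "e = 1 \<or> e = -1" "1 \<le> N" "j \<le> m"
  shows "\<bar>(1 + real_of_int e * (-1) ^ a) / real N ^ m\<bar> \<le> 2 / real N ^ j"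
proof -
  have N1: "1 \<le> real N" using assms by simp
  have N: "real N ^ j \<le> real N ^ m" using power_increasing[OF assms(3) N1] .
  have pos: "0 < real N ^ j" using assms by simp
  have "\<bar>(1 + real_of_int e * (-1) ^ a) / real N ^ m\<bar> = \<bar>1 + real_of_int e * (-1) ^ a\<bar> / real N ^ m"
    by (simp add: abs_divide)
  also have "\<dots> \<le> 2 / real N ^ m" using num_bound[OF assms(1), of a] pos N
    by (intro divide_right_mono) auto
  also have "\<dots> \<le> 2 / real N ^ j" using N pos N1 by (intro divide_left_mono) (auto intro: mult_pos_pos)
  finally show ?thesis .
qed

lemma harm_eq: "harm n = (\<Sum>k=1..n. 1 / real k)"
  by (simp add: harm_def divide_inverse)

lemma Mfin_harm:
  assumes "\<forall>k\<in>set ks. 1 \<le> k" "pm es"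
  shows "\<bar>Mfin n ks es\<bar> \<le> 2 ^ length ks * harm n ^ length ks"
  using assms
proof (induction n ks es rule: Mfin.induct)
  case (2 n k ks e es)
  define L where "L = length ks"
  have e: "e = 1 \<or> e = -1" and pes: "pm es" and k: "1 \<le> k" and ks: "\<forall>k\<in>set ks. 1 \<le> k"
    using 2 by auto
  have "\<bar>Mfin n (k # ks) (e # es)\<bar> \<le> (\<Sum>n1=1..n. \<bar>fac e n1 k\<bar> * \<bar>Mfin (n1 - 1) ks es\<bar>)"
    by (simp add: abs_mult[symmetric])
  also have "\<dots> \<le> (\<Sum>n1=1..n. (2 / real n1) * (2 ^ L * harm n ^ L))"
  proof (rule sum_mono)
    fix n1 assume n1: "n1 \<in> {1..n}"
    have "\<bar>Mfin (n1 - 1) ks es\<bar> \<le> 2 ^ L * harm (n1 - 1) ^ L" using 2(1)[OF n1 ks pes] by (simp add: L_def)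
    also have "\<dots> \<le> 2 ^ L * harm n ^ L" using n1
      by (intro mult_left_mono power_mono harm_mono) (auto simp: harm_nonneg)
    finally show "\<bar>fac e n1 k\<bar> * \<bar>Mfin (n1 - 1) ks es\<bar> \<le> (2 / real n1) * (2 ^ L * harm n ^ L)"
      using frac_bound2[OF e _ k, of n1 n1] n1 by (intro mult_mono) (auto simp: fac_def)
  qed
  also have "\<dots> = 2 * (2 ^ L * harm n ^ L) * harm n"
    by (simp add: harm_eq sum_distrib_left sum_distrib_right mult_ac)
  also have "\<dots> = 2 ^ length (k # ks) * harm n ^ length (k # ks)"
    by (simp add: L_def)
  finally show ?case .
qed (auto simp: harm_nonneg)

lemma W_harm:
  assumes "\<forall>k\<in>set ms. 1 \<le> k" "pm es"
  shows "\<bar>W n ms es\<bar> \<le> 2 ^ length ms * harm n ^ length ms"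
  using assms
proof (induction n ms es rule: W.induct)
  case (2 n k ks e es)
  define L where "L = length ks"
  have e: "e = 1 \<or> e = -1" and pes: "pm es" and k: "1 \<le> k" and ks: "\<forall>k\<in>set ks. 1 \<le> k"
    using 2 by auto
  have "\<bar>W n (k # ks) (e # es)\<bar> \<le> (\<Sum>n1=1..n. \<bar>cf e n n1 k\<bar> * \<bar>W n1 ks es\<bar>)"
    by (simp add: abs_mult[symmetric])
  also have "\<dots> \<le> (\<Sum>n1=1..n. (2 / real n1) * (2 ^ L * harm n ^ L))"
  proof (rule sum_mono)
    fix n1 assume n1: "n1 \<in> {1..n}"
    have "\<bar>W n1 ks es\<bar> \<le> 2 ^ L * harm n1 ^ L" using 2(1)[OF n1 ks pes] by (simp add: L_def)
    also have "\<dots> \<le> 2 ^ L * harm n ^ L" using n1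
      by (intro mult_left_mono power_mono harm_mono) (auto simp: harm_nonneg)
    finally show "\<bar>cf e n n1 k\<bar> * \<bar>W n1 ks es\<bar> \<le> (2 / real n1) * (2 ^ L * harm n ^ L)"
      using frac_bound2[OF e _ k, of n1 "n + n1"] n1 by (intro mult_mono) (auto simp: cf_def)
  qed
  also have "\<dots> = 2 * (2 ^ L * harm n ^ L) * harm n"
    by (simp add: harm_eq sum_distrib_left sum_distrib_right mult_ac)
  also have "\<dots> = 2 ^ length (k # ks) * harm n ^ length (k # ks)"
    by (simp add: L_def)
  finally show ?case .
qed (auto simp: harm_nonneg)

lemma Sx_harm:
  assumes "norm x \<le> 1" "\<forall>k\<in>set ms. 1 \<le> k" "pm es"
  shows "norm (Sx x n ms es) \<le> 2 ^ length ms * harm n ^ length ms"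
  using assms
proof (induction x n ms es rule: Sx.induct)
  case (1 x prev)
  then show ?case by (simp add: norm_power power_le_one)
next
  case (2 x n k ks e es)
  define L where "L = length ks"
  have e: "e = 1 \<or> e = -1" and pes: "pm es" and k: "1 \<le> k" and ks: "\<forall>k\<in>set ks. 1 \<le> k"
    using 2 by auto
  have "norm (Sx x n (k # ks) (e # es)) \<le> (\<Sum>n1=1..n. norm (of_real ((1 + of_int e * (-1) ^ (n + n1)) / (of_nat n1) ^ k) * Sx x n1 ks es))"
    by (simp only: Sx.simps) (rule norm_sum)
  also have "\<dots> \<le> (\<Sum>n1=1..n. (2 / real n1) * (2 ^ L * harm n ^ L))"
  proof (rule sum_mono)
    fix n1 assume n1: "n1 \<in> {1..n}"
    have "norm (Sx x n1 ks es) \<le> 2 ^ L * harm n1 ^ L" using 2(1)[OF n1 2(2) ks pes] by (simp add: L_def)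
    also have "\<dots> \<le> 2 ^ L * harm n ^ L" using n1
      by (intro mult_left_mono power_mono harm_mono) (auto simp: harm_nonneg)
    finally have "\<bar>(1 + real_of_int e * (-1) ^ (n + n1)) / real n1 ^ k\<bar> * norm (Sx x n1 ks es) \<le> (2 / real n1) * (2 ^ L * harm n ^ L)"
      using frac_bound2[OF e _ k, of n1 "n + n1"] n1 by (intro mult_mono) auto
    then show "norm (of_real ((1 + of_int e * (-1) ^ (n + n1)) / (of_nat n1) ^ k) * Sx x n1 ks es) \<le> (2 / real n1) * (2 ^ L * harm n ^ L)"
      by (simp only: norm_mult norm_of_real)
  qed
  also have "\<dots> = 2 * (2 ^ L * harm n ^ L) * harm n"
    by (simp add: harm_eq sum_distrib_left sum_distrib_right mult_ac)
  also have "\<dots> = 2 ^ length (k # ks) * harm n ^ length (k # ks)"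
    by (simp add: L_def)
  finally show ?case .
qed (auto simp: harm_nonneg)

lemma summ_harm:
  fixes f :: "nat \<Rightarrow> 'a::banach"
  assumes "\<And>n. norm (f n) \<le> C * (harm (Suc n) ^ a / real (Suc n) ^ 2)"
  shows "summable f"
  by (rule summable_comparison_test'[OF summable_mult[OF harm_summable], where N=0]) (use assms in auto)



lemma length_pvec[simp]: "length (pvec es) = length es"
  by (induction es) auto

lemma pm_pvec: "pm es \<Longrightarrow> pm (pvec es)"
proof (induction es)
  case (Cons e es)
  then show ?case using pm_prod[of es] by auto
qed simp

lemma qvec_rev: "qvec es = rev (prefprod es)"
  using rev_qvec[of es] by (metis rev_rev_ident)

lemma V_Mi:
  assumes x: "norm x < 1" and "ms \<noteq> []" "length ms = Suc (length es)" "pm es" "th = 1 \<or> th = -1"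
  shows "V x 0 ms (th # es) = Mi (rev ms) (map (\<lambda>t. th * t) (qvec es) @ [th]) x"
proof -
  have p1: "pm (1 # es)" using assms by simp
  have "V x 0 ms (th # es) = V x 0 ms (mult_hd (th * (-1) ^ 0) (1 # es))" by simp
  also have "\<dots> = Z x 0 ms (map (\<lambda>t. th * t) (prefprod (1 # es)))"
    using ZV[OF x _ p1 assms(5), of ms 0] assms by simp
  also have "\<dots> = Mi (rev ms) (rev (map (\<lambda>t. th * t) (prefprod (1 # es)))) x"
    by (rule Mi_Z0[OF x assms(2), symmetric]) (use assms pm_map[OF pm_prefprod[OF p1] assms(5)] in auto)
  also have "rev (map (\<lambda>t. th * t) (prefprod (1 # es))) = map (\<lambda>t. th * t) (qvec es) @ [th]"
    by (simp add: qvec_rev rev_map)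
  finally show ?thesis .
qed

lemma MconvW:
  assumes "eta \<noteq> []" "k \<noteq> []" "th = 1 \<or> th = -1" "1 \<le> j" "j \<le> length eps"
    "length m = length eps" "pm eps"
  shows "Mconv k (pvec eta) (1 # take (j - 1) m) (map (\<lambda>s. th * s) (pvec (take j eps)))
   = (\<Sum>i. fac (prod_list eta) (Suc i) (hd k + 1) * Mfin i (tl k) (pvec (tl eta))
        * ((1 + real_of_int th * real_of_int (prod_list (take j eps)) * (-1) ^ Suc i) / 2
           * W (Suc i) (take (j - 1) m) (take (j - 1) eps)))"
proof -
  define es where "es = take (j - 1) eps"
  define e where "e = eps ! (j - 1)"
  have tj: "take j eps = es @ [e]"
    using assms(4,5) take_Suc_conv_app_nth[of "j - 1" eps] by (simp add: es_def e_def)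
  have pes: "pm es" using assms(7) by (auto simp: es_def pm_def dest: in_set_takeD)
  have e: "e = 1 \<or> e = -1" using assms(4,5,7) by (auto simp: e_def pm_def)
  have lms: "length (take (j - 1) m) = length es" using assms by (simp add: es_def)
  obtain e0 etas where eta: "eta = e0 # etas" using assms(1) by (cases eta) auto
  have pv: "pvec (es @ [e]) = prod_list (es @ [e]) # tl (pvec (es @ [e]))" by (rule pvec_hd) simp
  define Q where "Q = prod_list es * e"
  have trm: "Mfin (Suc n - 1) (tl k) (tl (pvec eta)) * Mstar (Suc n) (tl (1 # take (j - 1) m)) (tl (map (\<lambda>s. th * s) (pvec (take j eps))))
        / real (Suc n) ^ (hd k + hd (1 # take (j - 1) m))
        * ((1 + real_of_int (hd (map (\<lambda>s. th * s) (pvec (take j eps)))) * (-1) ^ Suc n)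
           * (1 + real_of_int (hd (pvec eta)) * (-1) ^ Suc n) / 2)
     = fac (prod_list eta) (Suc n) (hd k + 1) * Mfin n (tl k) (pvec (tl eta))
        * ((1 + real_of_int th * real_of_int (prod_list (take j eps)) * (-1) ^ Suc n) / 2
           * W (Suc n) (take (j - 1) m) (take (j - 1) eps))" for n
  proof -
    define c where "c = 1 + real_of_int (th * Q) * (-1) ^ Suc n"
    define MS where "MS = Mstar (Suc n) (take (j - 1) m) (map (\<lambda>s. th * s) (tl (pvec (es @ [e]))))"
    define WW where "WW = W (Suc n) (take (j - 1) m) es"
    define F where "F = Mfin n (tl k) (pvec (tl eta))"
    define D where "D = real (Suc n) ^ (hd k + 1)"
    define H where "H = 1 + real_of_int (prod_list eta) * (-1) ^ Suc n"
    have wm: "c * MS = c * WW"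
      unfolding c_def MS_def WW_def Q_def by (rule WM[OF lms pes assms(3) e])
    have "Mfin (Suc n - 1) (tl k) (tl (pvec eta)) * Mstar (Suc n) (tl (1 # take (j - 1) m)) (tl (map (\<lambda>s. th * s) (pvec (take j eps))))
        / real (Suc n) ^ (hd k + hd (1 # take (j - 1) m))
        * ((1 + real_of_int (hd (map (\<lambda>s. th * s) (pvec (take j eps)))) * (-1) ^ Suc n)
           * (1 + real_of_int (hd (pvec eta)) * (-1) ^ Suc n) / 2)
        = F * MS / D * (c * H / 2)"
      unfolding F_def MS_def D_def c_def H_def Q_def tj
      by (subst pv, subst (2) pv) (simp add: eta)
    also have "\<dots> = F / D * H / 2 * (c * MS)" by (simp add: field_simps)
    also have "\<dots> = F / D * H / 2 * (c * WW)" by (simp only: wm)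
    also have "\<dots> = fac (prod_list eta) (Suc n) (hd k + 1) * Mfin n (tl k) (pvec (tl eta))
        * ((1 + real_of_int th * real_of_int (prod_list (take j eps)) * (-1) ^ Suc n) / 2
           * W (Suc n) (take (j - 1) m) (take (j - 1) eps))"
      unfolding F_def D_def H_def c_def WW_def Q_def fac_def tj es_def[symmetric]
      by (simp add: field_simps)
    finally show ?thesis .
  qed
  show ?thesis
    unfolding Mconv_def Let_def Suc_eq_plus1[symmetric] trm ..
qed



theorem mainTheorem10:
  fixes k m :: "nat list" and eta eps :: "int list" and x :: complex
  assumes "k \<noteq> []"
    and "\<forall>i\<in>set k. i \<ge> 1" and "\<forall>i\<in>set m. i \<ge> 1"
    and "length eta = length k" and "length eps = length m"
    and "\<forall>e\<in>set eta. e = 1 \<or> e = -1" and "\<forall>e\<in>set eps. e = 1 \<or> e = -1"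
    and "norm x < 1"
  shows "Mi (rev m @ (hd k + 1) # tl k)
            (map (\<lambda>e. prod_list eta * e) (qvec eps) @ pvec eta) x
       = (-1) ^ length m *
           (\<Sum>n. (let N = n + 1 in
              of_real (Mfin (N - 1) (tl k) (pvec (tl eta)) / (of_nat N) ^ (hd k + 1)
                       * (1 + of_int (prod_list eta) * (-1) ^ N))
              * Sx x N m eps))
         - (\<Sum>j=1..length m. (-1) ^ j
              * Mi (rev (drop (j - 1) m)) (map uminus (qvec (drop j eps)) @ [-1]) x
              * of_real (Mconv k (pvec eta) (1 # take (j - 1) m) (map uminus (pvec (take j eps)))))
         - (\<Sum>j=1..length m. (-1) ^ j
              * Mi (rev (drop (j - 1) m)) (qvec (drop j eps) @ [1]) x
              * of_real (Mconv k (pvec eta) (1 # take (j - 1) m) (pvec (take j eps))))"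

proof -
  define p where "p = length m"
  have x: "norm x < 1" using assms(8) .
  have peta: "pm eta" and peps: "pm eps" using assms(6,7) by (auto simp: pm_def)
  obtain k0 ks where k: "k = k0 # ks" using assms(1) by (cases k) auto
  obtain e0 etas where eta: "eta = e0 # etas" using assms(1,4) by (cases eta) auto
  define \<eta> where "\<eta> = prod_list eta"
  have \<eta>: "\<eta> = 1 \<or> \<eta> = -1" unfolding \<eta>_def by (rule pm_prod[OF peta])
  have k0: "1 \<le> k0" and ks1: "\<forall>t\<in>set ks. 1 \<le> t" using assms(2) k by auto
  have petas: "pm (pvec etas)" using peta eta by (auto intro: pm_pvec)
  define A where "A N = fac \<eta> N (hd k + 1) * Mfin (N - 1) (tl k) (pvec (tl eta))" for N
  have S1: "Mi (rev m @ (hd k + 1) # tl k) (map (\<lambda>e. prod_list eta * e) (qvec eps) @ pvec eta) x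
      = (\<Sum>i. of_real (A (Suc i)) * V x (Suc i) m eps)"
  proof -
    have pss: "pm (map (\<lambda>t. \<eta> * t) (prefprod eps))" by (rule pm_map[OF pm_prefprod[OF peps] \<eta>])
    have "Mi (rev m @ (hd k + 1) # tl k) (map (\<lambda>e. prod_list eta * e) (qvec eps) @ pvec eta) x
        = Mi (rev m @ ((hd k + 1) # tl k)) (rev (map (\<lambda>t. \<eta> * t) (prefprod eps)) @ pvec eta) x"
      by (simp add: qvec_rev rev_map \<eta>_def)
    also have "\<dots> = (\<Sum>i. of_real (fac (hd (pvec eta)) (Suc i) (hd ((hd k + 1) # tl k))
          * Mfin i (tl ((hd k + 1) # tl k)) (tl (pvec eta))) * Z x (Suc i) m (map (\<lambda>t. \<eta> * t) (prefprod eps)))"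
      by (rule Mi_Z[OF x]) (use assms(4,5) pss peta pm_pvec[OF peta] k eta in auto)
    also have "\<dots> = (\<Sum>i. of_real (A (Suc i)) * V x (Suc i) m eps)"
    proof (rule arg_cong[where f=suminf], rule ext)
      fix i
      have hp: "hd (pvec eta) = \<eta>" "tl (pvec eta) = pvec (tl eta)" by (simp_all add: eta \<eta>_def)
      have zv: "Z x (Suc i) m (map (\<lambda>t. \<eta> * t) (prefprod eps)) = V x (Suc i) m (mult_hd (\<eta> * (-1) ^ Suc i) eps)"
        by (rule ZV[OF x _ peps \<eta>]) (use assms(5) in simp)
      show "of_real (fac (hd (pvec eta)) (Suc i) (hd ((hd k + 1) # tl k))
          * Mfin i (tl ((hd k + 1) # tl k)) (tl (pvec eta))) * Z x (Suc i) m (map (\<lambda>t. \<eta> * t) (prefprod eps))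
          = of_real (A (Suc i)) * V x (Suc i) m eps"
      proof (cases "fac \<eta> (Suc i) (hd k + 1) = 0")
        case True
        then show ?thesis by (simp add: hp A_def)
      next
        case False
        then have "\<eta> * (-1) ^ Suc i = 1" using fac_nz \<eta> by blast
        then show ?thesis using zv by (simp add: hp A_def)
      qed
    qed
    finally show ?thesis .
  qed
  define Vm where "Vm j = V x 0 (drop (j - 1) m) ((-1) # drop j eps)" for j
  define Vp where "Vp j = V x 0 (drop (j - 1) m) (1 # drop j eps)" for j
  define P where "P j = real_of_int (prod_list (take j eps))" for j
  define WW where "WW j N = W N (take (j - 1) m) (take (j - 1) eps)" for j N
  define cm where "cm j N = A N * ((1 - P j * (-1) ^ N) / 2 * WW j N)" for j N
  define cp where "cp j N = A N * ((1 + P j * (-1) ^ N) / 2 * WW j N)" for j N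
  have T2: "of_real (A N) * V x N m eps = (-1) ^ p * (of_real (A N) * Sx x N m eps)
      - (\<Sum>j=1..p. (-1) ^ j * (Vm j * of_real (cm j N) + Vp j * of_real (cp j N)))" for N
    unfolding Vid[OF x assms(5)[symmetric] peps] Tm_def Vm_def Vp_def cm_def cp_def P_def WW_def p_def
    by (simp add: right_diff_distrib sum_distrib_left mult_ac distrib_left)
  define R where "R = length (tl k)"
  have Ab: "\<bar>A (Suc i)\<bar> \<le> 2 ^ (R + 1) * (harm (Suc i) ^ R / real (Suc i) ^ 2)" for i
  proof -
    have f: "\<bar>fac \<eta> (Suc i) (hd k + 1)\<bar> \<le> 2 / real (Suc i) ^ 2"
      unfolding fac_def by (rule frac_bound2[OF \<eta>]) (use k0 k in auto)
    have "\<bar>Mfin i (tl k) (pvec (tl eta))\<bar> \<le> 2 ^ R * harm i ^ R"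
      using Mfin_harm[of "tl k" "pvec (tl eta)" i] ks1 petas k eta by (simp add: R_def)
    also have "\<dots> \<le> 2 ^ R * harm (Suc i) ^ R"
      by (intro mult_left_mono power_mono harm_mono) (auto simp: harm_nonneg)
    finally have mf: "\<bar>Mfin i (tl k) (pvec (tl eta))\<bar> \<le> 2 ^ R * harm (Suc i) ^ R" .
    have "\<bar>A (Suc i)\<bar> \<le> (2 / real (Suc i) ^ 2) * (2 ^ R * harm (Suc i) ^ R)"
      unfolding A_def abs_mult using f mf by (intro mult_mono) auto
    then show ?thesis by (simp add: field_simps)
  qed
  have sS: "summable (\<lambda>i. of_real (A (Suc i)) * Sx x (Suc i) m eps)"
  proof (rule summ_harm[where C="2 ^ (R + 1) * 2 ^ p" and a="R + p"])
    fix i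
    have sx: "norm (Sx x (Suc i) m eps) \<le> 2 ^ p * harm (Suc i) ^ p"
      using Sx_harm[of x m eps "Suc i"] x assms(3) peps by (simp add: p_def)
    have "norm (of_real (A (Suc i)) * Sx x (Suc i) m eps)
        \<le> (2 ^ (R + 1) * (harm (Suc i) ^ R / real (Suc i) ^ 2)) * (2 ^ p * harm (Suc i) ^ p)"
      unfolding norm_mult norm_of_real using Ab sx by (intro mult_mono) (auto simp: harm_nonneg)
    then show "norm (of_real (A (Suc i)) * Sx x (Suc i) m eps)
        \<le> 2 ^ (R + 1) * 2 ^ p * (harm (Suc i) ^ (R + p) / real (Suc i) ^ 2)"
      by (simp add: power_add field_simps)
  qed
  have Pb: "\<bar>P j\<bar> = 1" for j
  proof -
    have "pm (take j eps)" using peps by (auto simp: pm_def dest: in_set_takeD)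
    then have "prod_list (take j eps) = 1 \<or> prod_list (take j eps) = -1" by (rule pm_prod)
    then show ?thesis by (auto simp: P_def)
  qed
  have Wb: "\<bar>WW j (Suc i)\<bar> \<le> 2 ^ (j - 1) * harm (Suc i) ^ (j - 1)" if j: "j \<in> {1..p}" for j i
  proof -
    have a1: "\<forall>t\<in>set (take (j - 1) m). 1 \<le> t" using assms(3) by (auto dest: in_set_takeD)
    have a2: "pm (take (j - 1) eps)" using peps by (auto simp: pm_def dest: in_set_takeD)
    have l: "length (take (j - 1) m) = j - 1" using j by (auto simp: p_def min_def)
    show ?thesis using W_harm[OF a1 a2, of "Suc i"] unfolding l WW_def .
  qed
  have sc: "summable (\<lambda>i. A (Suc i) * ((1 + s * P j * (-1) ^ Suc i) / 2 * WW j (Suc i)))"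
    if j: "j \<in> {1..p}" and s: "s = 1 \<or> s = -1" for j s
  proof (rule summ_harm[where C="2 ^ (R + 1) * 2 ^ (j - 1)" and a="R + (j - 1)"])
    fix i
    have h: "\<bar>(1 + s * P j * (-1) ^ Suc i) / 2\<bar> \<le> 1"
    proof -
      have "\<bar>s * P j * (-1) ^ Suc i\<bar> = 1" using Pb[of j] s by (auto simp: abs_mult)
      then show ?thesis using abs_triangle_ineq[of 1 "s * P j * (-1) ^ Suc i"] by simp
    qed
    have "\<bar>(1 + s * P j * (-1) ^ Suc i) / 2 * WW j (Suc i)\<bar> \<le> 1 * (2 ^ (j - 1) * harm (Suc i) ^ (j - 1))"
      unfolding abs_mult using h Wb[OF j] by (intro mult_mono) auto
    then have "\<bar>A (Suc i) * ((1 + s * P j * (-1) ^ Suc i) / 2 * WW j (Suc i))\<bar>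
        \<le> (2 ^ (R + 1) * (harm (Suc i) ^ R / real (Suc i) ^ 2)) * (1 * (2 ^ (j - 1) * harm (Suc i) ^ (j - 1)))"
      unfolding abs_mult[of "A (Suc i)"] using Ab by (intro mult_mono) (auto simp: harm_nonneg)
    then show "norm (A (Suc i) * ((1 + s * P j * (-1) ^ Suc i) / 2 * WW j (Suc i)))
        \<le> 2 ^ (R + 1) * 2 ^ (j - 1) * (harm (Suc i) ^ (R + (j - 1)) / real (Suc i) ^ 2)"
      by (simp add: power_add field_simps)
  qed
  have scm: "summable (\<lambda>i. cm j (Suc i))" if "j \<in> {1..p}" for j
    using sc[OF that, of "-1"] by (simp add: cm_def)
  have scp: "summable (\<lambda>i. cp j (Suc i))" if "j \<in> {1..p}" for j
    using sc[OF that, of 1] by (simp add: cp_def)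
  define Sval where "Sval = (\<Sum>i. of_real (A (Suc i)) * Sx x (Suc i) m eps)"
  define Cm where "Cm j = (\<Sum>i. cm j (Suc i))" for j
  define Cp where "Cp j = (\<Sum>i. cp j (Suc i))" for j
  have sums: "(\<lambda>i. of_real (A (Suc i)) * V x (Suc i) m eps) sums
      ((-1) ^ p * Sval - (\<Sum>j=1..p. (-1) ^ j * (Vm j * of_real (Cm j) + Vp j * of_real (Cp j))))"
    unfolding T2
  proof (intro sums_diff sums_mult sums_sum sums_add)
    show "(\<lambda>i. of_real (A (Suc i)) * Sx x (Suc i) m eps) sums Sval"
      unfolding Sval_def by (rule summable_sums[OF sS])
    fix j assume j: "j \<in> {1..p}"
    show "(\<lambda>i. of_real (cm j (Suc i)) :: complex) sums of_real (Cm j)"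
      unfolding Cm_def sums_of_real_iff by (rule summable_sums[OF scm[OF j]])
    show "(\<lambda>i. of_real (cp j (Suc i)) :: complex) sums of_real (Cp j)"
      unfolding Cp_def sums_of_real_iff by (rule summable_sums[OF scp[OF j]])
  qed
  have LHS: "Mi (rev m @ (hd k + 1) # tl k) (map (\<lambda>e. prod_list eta * e) (qvec eps) @ pvec eta) x
      = (-1) ^ p * Sval - (\<Sum>j=1..p. (-1) ^ j * (Vm j * of_real (Cm j) + Vp j * of_real (Cp j)))"
    unfolding S1 using sums_unique[OF sums] by simp
  have Seq: "Sval = (\<Sum>n. (let N = n + 1 in
              of_real (Mfin (N - 1) (tl k) (pvec (tl eta)) / (of_nat N) ^ (hd k + 1)
                       * (1 + of_int (prod_list eta) * (-1) ^ N))
              * Sx x N m eps))"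
    unfolding Sval_def A_def fac_def \<eta>_def Let_def by (simp add: field_simps)
  have Vmeq: "Vm j = Mi (rev (drop (j - 1) m)) (map uminus (qvec (drop j eps)) @ [-1]) x"
    if j: "j \<in> {1..p}" for j
  proof -
    have "Vm j = Mi (rev (drop (j - 1) m)) (map (\<lambda>t. (-1) * t) (qvec (drop j eps)) @ [-1]) x"
      unfolding Vm_def
      by (rule V_Mi[OF x]) (use j assms(5) peps in \<open>auto simp: p_def pm_def dest: in_set_dropD\<close>)
    then show ?thesis by simp
  qed
  have Vpeq: "Vp j = Mi (rev (drop (j - 1) m)) (qvec (drop j eps) @ [1]) x"
    if j: "j \<in> {1..p}" for j
  proof -
    have "Vp j = Mi (rev (drop (j - 1) m)) (map (\<lambda>t. 1 * t) (qvec (drop j eps)) @ [1]) x"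
      unfolding Vp_def
      by (rule V_Mi[OF x]) (use j assms(5) peps in \<open>auto simp: p_def pm_def dest: in_set_dropD\<close>)
    then show ?thesis by simp
  qed
  have Cmeq: "Cm j = Mconv k (pvec eta) (1 # take (j - 1) m) (map uminus (pvec (take j eps)))"
    if j: "j \<in> {1..p}" for j
  proof -
    have jj: "1 \<le> j" "j \<le> length eps" using j assms(5) by (auto simp: p_def)
    have M: "Mconv k (pvec eta) (1 # take (j - 1) m) (map (\<lambda>s. (-1) * s) (pvec (take j eps)))
      = (\<Sum>i. fac (prod_list eta) (Suc i) (hd k + 1) * Mfin i (tl k) (pvec (tl eta))
        * ((1 + real_of_int (-1) * real_of_int (prod_list (take j eps)) * (-1) ^ Suc i) / 2
           * W (Suc i) (take (j - 1) m) (take (j - 1) eps)))"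
      by (rule MconvW[OF _ assms(1)]) (use eta jj assms(5) peps in auto)
    show ?thesis using M by (simp add: Cm_def cm_def A_def P_def WW_def \<eta>_def)
  qed
  have Cpeq: "Cp j = Mconv k (pvec eta) (1 # take (j - 1) m) (pvec (take j eps))"
    if j: "j \<in> {1..p}" for j
  proof -
    have jj: "1 \<le> j" "j \<le> length eps" using j assms(5) by (auto simp: p_def)
    have M: "Mconv k (pvec eta) (1 # take (j - 1) m) (map (\<lambda>s. (1) * s) (pvec (take j eps)))
      = (\<Sum>i. fac (prod_list eta) (Suc i) (hd k + 1) * Mfin i (tl k) (pvec (tl eta))
        * ((1 + real_of_int (1) * real_of_int (prod_list (take j eps)) * (-1) ^ Suc i) / 2
           * W (Suc i) (take (j - 1) m) (take (j - 1) eps)))"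
      by (rule MconvW[OF _ assms(1)]) (use eta jj assms(5) peps in auto)
    show ?thesis using M by (simp add: Cp_def cp_def A_def P_def WW_def \<eta>_def)
  qed
  have sumeq: "(\<Sum>j=1..p. (-1) ^ j * (Vm j * of_real (Cm j) + Vp j * of_real (Cp j)))
      = (\<Sum>j=1..length m. (-1) ^ j
              * Mi (rev (drop (j - 1) m)) (map uminus (qvec (drop j eps)) @ [-1]) x
              * of_real (Mconv k (pvec eta) (1 # take (j - 1) m) (map uminus (pvec (take j eps)))))
      + (\<Sum>j=1..length m. (-1) ^ j
              * Mi (rev (drop (j - 1) m)) (qvec (drop j eps) @ [1]) x
              * of_real (Mconv k (pvec eta) (1 # take (j - 1) m) (pvec (take j eps))))"
    unfolding sum.distrib[symmetric] p_def[symmetric]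
    by (rule sum.cong[OF refl]) (simp add: Vmeq Vpeq Cmeq Cpeq algebra_simps)
  show ?thesis
    unfolding LHS Seq[symmetric] p_def[symmetric] sumeq by (simp add: algebra_simps)
qed


end
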